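(* Let $n\ge 1$ be an integer and let $x$ be an integer with $0\le x\le n-1$ such that there exists a positive divisor $h$ of $x$ with $(2x+1)\mid(2n-2h+1)$. Then $F_{n,n-x}=1$.
   Context: Define maps $G,S:\mathbb Z^2\to\mathbb Z^2$ by $G(x,y)=(x+y,y)$ and $S(x,y)=(3x-2y+1,\,2x-y+1)$. Define the array $(F_{n,k})_{n,k\ge 0}$ by $F_{0,0}=1$ and, for $(n,k)\neq(0,0)$, $F_{n,k}$ is the number of finite words $w=w_1w_2\cdots w_m$ ($m\ge 0$) over the alphabet $\{G,S\}$ with $w_1\circ w_2\circ\cdots\circ w_m(1,1)=(n,k)$ (the empty word acts as the identity). Equivalently: start with all entries $0$, set $F_{0,0}=1$ and $F_{1,1}=1$, and thereafter, whenever an entry $F_{n,k}$ with $n\ge 1$ changes its value, increase $F_{n+k,k}$ and $F_{3n+1-2k,\,2n+1-k}$ by $1$. Every positive integer divides $0$. *)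

theory Defs
  imports Main
begin

datatype gs = Gm | Sm

fun gs_app :: "gs \<Rightarrow> int \<times> int \<Rightarrow> int \<times> int" where
  "gs_app Gm (x, y) = (x + y, y)"
| "gs_app Sm (x, y) = (3*x - 2*y + 1, 2*x - y + 1)"

definition act :: "gs list \<Rightarrow> int \<times> int \<Rightarrow> int \<times> int" where
  "act w p = foldr gs_app w p"

definition F :: "nat \<Rightarrow> nat \<Rightarrow> nat" where
  "F n k = (if n = 0 \<and> k = 0 then 1
            else card {w. act w (1, 1) = (int n, int k)})"

end

theory Submission
  imports Defs
begin

lemma act_Cons[simp]: "act (a # w) p = gs_app a (act w p)"
  by (simp add: act_def)
lemma act_Nil[simp]: "act [] p = p"
  by (simp add: act_def)
lemma act_append: "act (u @ v) p = act u (act v p)"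
  by (simp add: act_def)

lemma inv_act: "snd (act w (1,1)) \<ge> 1 \<and> fst (act w (1,1)) \<ge> snd (act w (1,1))
   \<and> (w \<noteq> [] \<longrightarrow> fst (act w (1,1)) \<ge> 2)"
proof (induction w)
  case Nil then show ?case by simp
next
  case (Cons a w)
  obtain X Y where e: "act w (1,1) = (X,Y)" by fastforce
  show ?case using Cons e by (cases a) auto
qed

lemma step_inj:
  assumes "snd p \<ge> 1" "fst p \<ge> snd p" "snd q \<ge> 1" "fst q \<ge> snd q"
    and "gs_app a p = gs_app b q"
  shows "a = b \<and> p = q"
  using assms by (cases p; cases q; cases a; cases b) auto

lemma act_inj: "act w (1,1) = act w' (1,1) \<Longrightarrow> w = w'"
proof (induction w arbitrary: w')
  case Nil
  then show ?case using inv_act[of w'] by (cases w') auto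
next
  case (Cons a w)
  show ?case
  proof (cases w')
    case Nil
    then show ?thesis using Cons.prems inv_act[of "a#w"] by auto
  next
    case (Cons b v)
    have "gs_app a (act w (1,1)) = gs_app b (act v (1,1))"
      using Cons.prems Cons by simp
    then have "a = b \<and> act w (1,1) = act v (1,1)"
      using step_inj inv_act[of w] inv_act[of v] by blast
    then show ?thesis using Cons.IH Cons by auto
  qed
qed

lemma rep_S_diag: "act (replicate j Sm) (1,1) = (1 + int j, 1 + int j)"
  by (induction j) auto

lemma rep_G: "act (replicate k Gm) (c, c) = ((1 + int k) * c, c)"
  by (induction k) (auto simp: algebra_simps)

lemma rep_S: "act (replicate m Sm) (X, Y) = (X + int m * (2*(X-Y)+1), Y + int m * (2*(X-Y)+1))"
  by (induction m) (auto simp: algebra_simps)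

theorem theorem9:
  fixes n x :: nat
  assumes "n \<ge> 1" and "x \<le> n - 1"
    and "\<exists>h::nat. h > 0 \<and> h dvd x \<and> (2 * int x + 1) dvd (2 * int n - 2 * int h + 1)"
  shows "F n (n - x) = 1"
proof -
  have ex: "\<exists>w. act w (1,1) = (int n, int (n - x))"
  proof (cases "x = 0")
    case True
    then show ?thesis using assms rep_S_diag[of "n-1"]
      by (intro exI[of _ "replicate (n-1) Sm"]) auto
  next
    case False
    from assms(3) obtain h :: nat where h: "h > 0" "h dvd x"
      "(2 * int x + 1) dvd (2 * int n - 2 * int h + 1)" by blast
    obtain k where k: "x = h * k" using h(2) by blast
    have hx: "h \<le> x" using h False by (simp add: dvd_imp_le)
    have k1: "k \<ge> 1" using k False by (cases k) auto
    have eq: "2 * int n - 2 * int h + 1 = 2 * (int n - int x - int h) + (2 * int x + 1)"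
      by algebra
    have "(2 * int x + 1) dvd (2 * (int n - int x - int h) + (2 * int x + 1))"
      using h(3) unfolding eq .
    then have d2: "(2 * int x + 1) dvd (2 * (int n - int x - int h))"
      by (rule dvd_add_left_iff[THEN iffD1, OF dvd_refl])
    define t where "t = int n - int x - int h"
    have tt: "t = (int x + 1) * (2 * t) - (2 * int x + 1) * t"
      by algebra
    have d3: "(2 * int x + 1) dvd (2 * t)" using d2 unfolding t_def .
    have d4: "(2 * int x + 1) dvd ((int x + 1) * (2 * t))" using d3 by (rule dvd_mult)
    have d5: "(2 * int x + 1) dvd ((2 * int x + 1) * t)" by (rule dvd_triv_left)
    have "(2 * int x + 1) dvd ((int x + 1) * (2 * t) - (2 * int x + 1) * t)"
      using d4 d5 by (rule dvd_diff)
    then have "(2 * int x + 1) dvd t"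
      by (subst tt)
    then have "(2 * int x + 1) dvd (int n - int x - int h)"
      unfolding t_def .
    then obtain q where q: "int n - int x - int h = (2 * int x + 1) * q" by blast
    have "q \<ge> 0"
    proof (rule ccontr)
      assume "\<not> q \<ge> 0"
      then have "q \<le> -1" by simp
      then have "(2 * int x + 1) * q \<le> (2 * int x + 1) * (-1)"
        by (intro mult_left_mono) simp_all
      then have qq: "(2 * int x + 1) * q \<le> - (2 * int x + 1)" by simp
      have "x + 1 \<le> n" using assms(1,2) by linarith
      then have "int x + 1 \<le> int n" by linarith
      moreover have "int h \<le> int x" using hx by simp
      ultimately show False using q qq by linarith
    qed
    then obtain m :: nat where m: "q = int m" using nonneg_int_cases by blast
    define w where "w = replicate m Sm @ replicate k Gm @ replicate (h-1) Sm"
    have "act (replicate (h-1) Sm) (1,1) = (int h, int h)"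
      using rep_S_diag[of "h-1"] h(1) by simp
    then have "act (replicate k Gm @ replicate (h-1) Sm) (1,1) = ((1 + int k) * int h, int h)"
      by (simp add: act_append rep_G)
    then have A0: "act w (1,1) = act (replicate m Sm) ((1 + int k) * int h, int h)"
      unfolding w_def by (simp only: act_append)
    have dd: "(1 + int k) * int h - int h = int k * int h" by algebra
    have A: "act w (1,1) = ((1 + int k) * int h + int m * (2*(int k * int h) + 1),
        int h + int m * (2*(int k * int h) + 1))"
      unfolding A0 rep_S dd ..
    moreover have xk: "int x = int k * int h" using k by simp
    have nn: "int n = int x + int h + (2 * int x + 1) * int m" using q unfolding m by linarith
    have e1: "(1 + int k) * int h + int m * (2*(int k * int h) + 1) = int n"
      unfolding nn xk by algebra
    have e2: "int h + int m * (2*(int k * int h) + 1) = int n - int x"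
      unfolding nn xk by algebra
    have "act w (1,1) = (int n, int n - int x)"
      unfolding A e1 e2 ..
    then show ?thesis using assms by (intro exI[of _ w]) auto
  qed
  then obtain w0 where w0: "act w0 (1,1) = (int n, int (n - x))" by blast
  have "{w. act w (1,1) = (int n, int (n - x))} = {w0}"
    using w0 act_inj by auto
  then show ?thesis using assms(1) unfolding F_def by simp
qed

end
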